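(* Let $n\ge 2$ and let $\widetilde X$ be an $n\times n$ real random matrix whose rows $X_1,\ldots,X_n$ are independent and identically distributed random vectors in $\mathbb{R}^n$ (with arbitrary common distribution). Then $$\liminf_{\epsilon\to0^+}\frac{\mathbb{P}\big(\sigma_{\min}(\widetilde X)<\epsilon\big)}{\epsilon}>0,$$ i.e. $0\in \mathcal{C}_1\big(\sigma_{\min}(\widetilde X)\big)$. Moreover, if $\widetilde X$ is invertible almost surely, then $$\mathbb{E}\left[\frac{1}{\sigma_{\min}(\widetilde X)}\right]=\mathbb{E}\big[\|\widetilde X^{-1}\|_2\big]=+\infty.$$
   Context: $\sigma_{\min}(A)$ denotes the smallest singular value of a square real matrix $A$, i.e. the square root of the smallest eigenvalue of $A^TA$; equivalently $\sigma_{\min}(A)=\min_{\|x\|_2=1}\|Ax\|_2$, and $\sigma_{\min}(A)=1/\|A^{-1}\|_2$ if $A$ is invertible, where $\|\cdot\|_2$ is the operator norm induced by the Euclidean norm. For a random vector $Z$ in $\mathbb{R}^k$ and an integer $m\ge0$, the $m$-dimensional mould $\mathcal{C}_m(Z)$ is the set of all $z\in\mathbb{R}^k$ with $\liminf_{\epsilon\to0^+}\mathbb{P}(\|Z-z\|_2<\epsilon)/\epsilon^m>0$. *)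

theory Defs
  imports "HOL-Probability.Probability"
begin

definition smin :: "real^'n^'n \<Rightarrow> real" where
  "smin A = Inf {norm (A *v x) | x. norm x = 1}"

definition opnorm2 :: "real^'n^'n \<Rightarrow> real" where
  "opnorm2 A = onorm (\<lambda>x. A *v x)"

end

theory Submission
  imports Defs
begin


lemma smin_set_ne: "{norm (A *v x) | x::real^'n. norm x = 1} \<noteq> {}"
proof -
  obtain k :: 'n where True by simp
  have "norm (axis k (1::real)) = 1" by simp
  thus ?thesis by blast
qed

lemma smin_set_bdd: "bdd_below {norm (A *v x) | x::real^'n. norm x = 1}"
  by (rule bdd_belowI[of _ 0]) auto

lemma smin_le: "norm u = 1 \<Longrightarrow> smin A \<le> norm (A *v u)"
  unfolding smin_def by (rule cInf_lower) (auto intro: smin_set_bdd)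

lemma smin_nonneg: "0 \<le> smin A"
  unfolding smin_def by (rule cInf_greatest[OF smin_set_ne]) auto

lemma smin_ge: "(\<And>x. norm x = 1 \<Longrightarrow> c \<le> norm (A *v x)) \<Longrightarrow> c \<le> smin A"
  unfolding smin_def by (rule cInf_greatest[OF smin_set_ne]) auto

lemma norm_mv_le: fixes D :: "real^'n^'n"
  shows "norm (D *v x) \<le> (real CARD('n))^2 * norm D * norm x"
proof -
  have bl: "bounded_linear ((*v) D)" by (simp add: matrix_vector_mul_bounded_linear)
  have "norm (D *v x) \<le> onorm ((*v) D) * norm x" using onorm[OF bl] .
  also have "onorm ((*v) D) \<le> (\<Sum>i\<in>UNIV. \<Sum>j\<in>UNIV. \<bar>D $ i $ j\<bar>)"
    by (rule onorm_le_matrix_component_sum)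
  also have "\<dots> \<le> (\<Sum>i\<in>(UNIV::'n set). \<Sum>j\<in>(UNIV::'n set). norm D)"
  proof (intro sum_mono)
    fix i j
    have "\<bar>D $ i $ j\<bar> \<le> norm (D $ i)" by (metis component_le_norm_cart real_norm_def)
    also have "\<dots> \<le> norm D" by (rule Finite_Cartesian_Product.norm_nth_le)
    finally show "\<bar>D $ i $ j\<bar> \<le> norm D" .
  qed
  also have "\<dots> = (real CARD('n))^2 * norm D" by (simp add: power2_eq_square)
  finally show ?thesis by (simp add: mult_right_mono)
qed

lemma smin_lip: fixes A B :: "real^'n^'n"
  shows "smin A \<le> smin B + (real CARD('n))^2 * norm (A - B)"
proof -
  have "smin A - (real CARD('n))^2 * norm (A - B) \<le> smin B"
  proof (rule smin_ge)
    fix x :: "real^'n" assume x: "norm x = 1"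
    have "norm (A *v x) \<le> norm (B *v x) + norm ((A - B) *v x)"
      by (metis add_diff_cancel_left' matrix_vector_mult_diff_rdistrib norm_triangle_ineq4 diff_add_cancel norm_triangle_ineq)
    also have "norm ((A - B) *v x) \<le> (real CARD('n))^2 * norm (A - B)" using norm_mv_le[of "A - B" x] x by simp
    finally show "smin A - (real CARD('n))^2 * norm (A - B) \<le> norm (B *v x)" using smin_le[OF x, of A] by linarith
  qed
  thus ?thesis by linarith
qed

lemma smin_cont: "continuous_on UNIV (smin :: real^'n^'n \<Rightarrow> real)"
proof (rule continuous_on_iff[THEN iffD2], intro ballI allI impI)
  fix A :: "real^'n^'n" and e :: real assume e: "0 < e"
  define c where "c = (real CARD('n))^2"
  have c: "c > 0" unfolding c_def by simp
  show "\<exists>d>0. \<forall>B\<in>UNIV. dist B A < d \<longrightarrow> dist (smin B) (smin A) < e"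
  proof (intro exI[of _ "e / c"] conjI ballI impI)
    show "e / c > 0" using e c by simp
    fix B assume "dist B A < e / c"
    hence d: "c * norm (B - A) < e" using c by (simp add: dist_norm field_simps)
    have "norm (A - B) = norm (B - A)" by (simp add: norm_minus_commute)
    thus "dist (smin B) (smin A) < e"
      using smin_lip[of A B] smin_lip[of B A] d unfolding c_def dist_real_def by auto
  qed
qed



lemma smin_inv: fixes A :: "real^'n^'n" assumes "invertible A"
  shows "0 < smin A \<and> 1 / smin A \<le> opnorm2 (matrix_inv A)"
proof -
  define B where "B = matrix_inv A"
  have BA: "B ** A = mat 1" using assms unfolding B_def matrix_inv_def invertible_def
    by (metis (mono_tags, lifting) someI_ex)
  have bl: "bounded_linear ((*v) B)" by (simp add: matrix_vector_mul_bounded_linear)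
  obtain k :: 'n where True by simp
  have ax: "B *v (A *v axis k 1) = axis k (1::real)" by (simp add: matrix_vector_mul_assoc BA)
  have pos: "0 < onorm ((*v) B)"
    using onorm_pos_lt[OF bl] ax by (metis norm_axis_1 norm_zero zero_neq_one)
  have lb: "1 / onorm ((*v) B) \<le> smin A"
  proof (rule smin_ge)
    fix x :: "real^'n" assume x: "norm x = 1"
    have "1 = norm (B *v (A *v x))" using x by (simp add: matrix_vector_mul_assoc BA)
    also have "\<dots> \<le> onorm ((*v) B) * norm (A *v x)" using onorm[OF bl] .
    finally show "1 / onorm ((*v) B) \<le> norm (A *v x)" using pos by (simp add: field_simps)
  qed
  have sp: "0 < smin A" using lb pos by (meson order_less_le_trans zero_less_divide_1_iff)
  have "1 / smin A \<le> onorm ((*v) B)" using lb pos sp by (simp add: field_simps)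
  thus ?thesis using sp unfolding opnorm2_def B_def by simp
qed

lemma orth_pair: fixes S :: "(real^'n) set"
  assumes "finite S" "card S + 2 \<le> CARD('n)"
  shows "\<exists>a b. norm a = 1 \<and> norm b = 1 \<and> a \<bullet> b = 0 \<and> (\<forall>c\<in>S. c \<bullet> a = 0 \<and> c \<bullet> b = 0)"
proof -
  define W where "W = {y \<in> UNIV. \<forall>x \<in> span S. orthogonal x y}"
  have "dim W + dim (span S) = dim (UNIV :: (real^'n) set)"
    unfolding W_def by (rule dim_subspace_orthogonal_to_vectors) auto
  moreover have "dim (span S) \<le> card S" using assms(1) by (simp add: dim_le_card')
  ultimately have dW: "dim W \<ge> 2" using assms(2) by simp
  have sW: "subspace W" unfolding W_def by (auto simp: subspace_def orthogonal_clauses)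
  obtain C where C: "C \<subseteq> W" "pairwise orthogonal C" "\<And>x. x \<in> C \<Longrightarrow> norm x = 1"
     "independent C" "finite C" "card C = dim W" "span C = W"
    by (metis orthonormal_basis_subspace[OF sW] independent_imp_finite)
  have "card C \<ge> 2" using C dW by simp
  then obtain a b where ab: "a \<in> C" "b \<in> C" "a \<noteq> b"
    by (metis One_nat_def card_le_Suc0_iff_eq not_less_eq_eq numeral_2_eq_2 C(5))
  have "a \<bullet> b = 0" using C(2) ab unfolding pairwise_def orthogonal_def by blast
  moreover have "\<forall>c\<in>S. c \<bullet> a = 0 \<and> c \<bullet> b = 0"
    using ab C(1) unfolding W_def orthogonal_def by (auto simp: span_base)
  ultimately show ?thesis using ab C(3) by blast
qed

definition chartf :: "real \<Rightarrow> real \<Rightarrow> int" where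
  "chartf p q = (if \<bar>q\<bar> \<le> \<bar>p\<bar> then 0 else 1)"
definition slopef :: "real \<Rightarrow> real \<Rightarrow> real" where
  "slopef p q = (if \<bar>q\<bar> \<le> \<bar>p\<bar> then q / p else p / q)"

lemma slopef_bound: "\<bar>slopef p q\<bar> \<le> 1"
  unfolding slopef_def by (auto simp: abs_divide divide_le_eq_1)

lemma floor_eq_close: assumes "floor (s / d) = floor (t / d)" "d > 0"
  shows "\<bar>s - t\<bar> \<le> d"
proof -
  have a: "of_int \<lfloor>s/d\<rfloor> \<le> s/d" "s/d < of_int \<lfloor>s/d\<rfloor> + 1"
    "of_int \<lfloor>t/d\<rfloor> \<le> t/d" "t/d < of_int \<lfloor>t/d\<rfloor> + 1" by linarith+
  define k where "k = \<lfloor>s/d\<rfloor>"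
  have b: "of_int k \<le> s/d" "s/d < of_int k + 1" "of_int k \<le> t/d" "t/d < of_int k + 1"
    using a assms(1) unfolding k_def by simp_all
  have "\<bar>s / d - t / d\<bar> < 1" using b unfolding abs_less_iff by linarith
  hence "\<bar>s - t\<bar> / d < 1" using assms(2) by (simp add: diff_divide_distrib[symmetric] abs_divide)
  thus ?thesis using assms(2) by (simp add: field_simps)
qed

lemma two_d: fixes p1 q1 p2 q2 d :: real
  assumes "chartf p1 q1 = chartf p2 q2" "floor (slopef p1 q1 / d) = floor (slopef p2 q2 / d)" "d > 0"
  shows "\<exists>v1 v2. v1^2 + v2^2 = 1 \<and> \<bar>v1 * p1 + v2 * q1\<bar> \<le> (\<bar>p1\<bar> + \<bar>q1\<bar>) * d \<and> v1 * p2 + v2 * q2 = 0"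
proof -
  have cl: "\<bar>slopef p1 q1 - slopef p2 q2\<bar> \<le> d" using floor_eq_close[OF assms(2,3)] .
  show ?thesis
  proof (cases "\<bar>q2\<bar> \<le> \<bar>p2\<bar>")
    case True
    hence c1: "\<bar>q1\<bar> \<le> \<bar>p1\<bar>" using assms(1) unfolding chartf_def by (auto split: if_splits)
    define t1 where "t1 = q1 / p1"
    define t2 where "t2 = q2 / p2"
    have e1: "q1 = t1 * p1" using c1 unfolding t1_def by (cases "p1 = 0") auto
    have e2: "q2 = t2 * p2" using True unfolding t2_def by (cases "p2 = 0") auto
    have tt: "\<bar>t1 - t2\<bar> \<le> d" using cl True c1 unfolding slopef_def t1_def t2_def by simp
    define s where "s = sqrt (1 + t2^2)"
    have s1: "s \<ge> 1" unfolding s_def by simp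
    have ss: "s^2 = 1 + t2^2" unfolding s_def by simp
    have ne: "1 + t2^2 \<noteq> 0" by (smt (verit) zero_le_power2)
    show ?thesis
    proof (intro exI conjI)
      show "(- t2 / s)^2 + (1 / s)^2 = 1" using ss s1 ne by (simp add: power_divide add_divide_distrib[symmetric])
      show "- t2 / s * p2 + 1 / s * q2 = 0" using e2 by (simp add: field_simps)
      have "- t2 / s * p1 + 1 / s * q1 = (t1 - t2) * p1 / s"
        using e1 s1 by (simp add: field_simps)
      hence "\<bar>- t2 / s * p1 + 1 / s * q1\<bar> = \<bar>t1 - t2\<bar> * \<bar>p1\<bar> / s"
        using s1 by (simp add: abs_mult abs_divide)
      also have "\<dots> \<le> \<bar>t1 - t2\<bar> * \<bar>p1\<bar>" using frac_le[of "\<bar>t1 - t2\<bar> * \<bar>p1\<bar>" "\<bar>t1 - t2\<bar> * \<bar>p1\<bar>" 1 s] s1 by simp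
      also have "\<dots> \<le> d * \<bar>p1\<bar>" using tt by (simp add: mult_right_mono)
      also have "\<dots> \<le> (\<bar>p1\<bar> + \<bar>q1\<bar>) * d" using assms(3) by (simp add: algebra_simps)
      finally show "\<bar>- t2 / s * p1 + 1 / s * q1\<bar> \<le> (\<bar>p1\<bar> + \<bar>q1\<bar>) * d" .
    qed
  next
    case False
    hence c1: "\<not> \<bar>q1\<bar> \<le> \<bar>p1\<bar>" using assms(1) unfolding chartf_def by (auto split: if_splits)
    define t1 where "t1 = p1 / q1"
    define t2 where "t2 = p2 / q2"
    have e1: "p1 = t1 * q1" using c1 unfolding t1_def by (cases "q1 = 0") auto
    have e2: "p2 = t2 * q2" using False unfolding t2_def by (cases "q2 = 0") auto
    have tt: "\<bar>t1 - t2\<bar> \<le> d" using cl False c1 unfolding slopef_def t1_def t2_def by simp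
    define s where "s = sqrt (1 + t2^2)"
    have s1: "s \<ge> 1" unfolding s_def by simp
    have ss: "s^2 = 1 + t2^2" unfolding s_def by simp
    have ne: "1 + t2^2 \<noteq> 0" by (smt (verit) zero_le_power2)
    show ?thesis
    proof (intro exI conjI)
      show "(1 / s)^2 + (- t2 / s)^2 = 1" using ss s1 ne by (simp add: power_divide add_divide_distrib[symmetric])
      show "1 / s * p2 + - t2 / s * q2 = 0" using e2 by (simp add: field_simps)
      have "1 / s * p1 + - t2 / s * q1 = (t1 - t2) * q1 / s"
        using e1 s1 by (simp add: field_simps)
      hence "\<bar>1 / s * p1 + - t2 / s * q1\<bar> = \<bar>t1 - t2\<bar> * \<bar>q1\<bar> / s"
        using s1 by (simp add: abs_mult abs_divide)
      also have "\<dots> \<le> \<bar>t1 - t2\<bar> * \<bar>q1\<bar>" using frac_le[of "\<bar>t1 - t2\<bar> * \<bar>q1\<bar>" "\<bar>t1 - t2\<bar> * \<bar>q1\<bar>" 1 s] s1 by simp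
      also have "\<dots> \<le> d * \<bar>q1\<bar>" using tt by (simp add: mult_right_mono)
      also have "\<dots> \<le> (\<bar>p1\<bar> + \<bar>q1\<bar>) * d" using assms(3) by (simp add: algebra_simps)
      finally show "\<bar>1 / s * p1 + - t2 / s * q1\<bar> \<le> (\<bar>p1\<bar> + \<bar>q1\<bar>) * d" .
    qed
  qed
qed



lemma det_bound:
  fixes Y cen :: "'n::finite \<Rightarrow> real^'n" and a b :: "real^'n"
  assumes r: "r1 \<noteq> r2" and rest: "rest = UNIV - {r1, r2}"
    and a: "norm a = 1" and b: "norm b = 1" and ab: "a \<bullet> b = 0"
    and cen: "\<forall>i\<in>rest. cen i \<bullet> a = 0 \<and> cen i \<bullet> b = 0"
    and close: "\<forall>i\<in>rest. norm (Y i - cen i) \<le> h"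
    and R: "norm (Y r1) \<le> R"
    and ch: "chartf (Y r1 \<bullet> a) (Y r1 \<bullet> b) = chartf (Y r2 \<bullet> a) (Y r2 \<bullet> b)"
    and fl: "floor (slopef (Y r1 \<bullet> a) (Y r1 \<bullet> b) / d) = floor (slopef (Y r2 \<bullet> a) (Y r2 \<bullet> b) / d)"
    and d: "d > 0"
  shows "smin (\<chi> i. Y i) \<le> 2 * R * d + real (card rest) * h"
proof -
  obtain v1 v2 where v: "v1^2 + v2^2 = 1"
    "\<bar>v1 * (Y r1 \<bullet> a) + v2 * (Y r1 \<bullet> b)\<bar> \<le> (\<bar>Y r1 \<bullet> a\<bar> + \<bar>Y r1 \<bullet> b\<bar>) * d"
    "v1 * (Y r2 \<bullet> a) + v2 * (Y r2 \<bullet> b) = 0"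
    using two_d[OF ch fl d] by blast
  define u where "u = v1 *\<^sub>R a + v2 *\<^sub>R b"
  have "u \<bullet> u = v1^2 + v2^2"
  proof -
    have "a \<bullet> a = 1" "b \<bullet> b = 1" using a b by (simp_all add: norm_eq_1)
    thus ?thesis unfolding u_def using ab
      by (simp add: inner_add_left inner_add_right inner_commute power2_eq_square)
  qed
  hence nu: "norm u = 1" using v(1) by (simp add: norm_eq_1)
  have iu: "y \<bullet> u = v1 * (y \<bullet> a) + v2 * (y \<bullet> b)" for y
    unfolding u_def by (simp add: inner_add_right)
  have t1: "\<bar>Y r1 \<bullet> u\<bar> \<le> 2 * R * d"
  proof -
    have "\<bar>Y r1 \<bullet> a\<bar> \<le> R" using Cauchy_Schwarz_ineq2[of "Y r1" a] a R by simp
    moreover have "\<bar>Y r1 \<bullet> b\<bar> \<le> R" using Cauchy_Schwarz_ineq2[of "Y r1" b] b R by simp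
    ultimately have "(\<bar>Y r1 \<bullet> a\<bar> + \<bar>Y r1 \<bullet> b\<bar>) * d \<le> 2 * R * d" using d by (simp add: mult_right_mono)
    thus ?thesis using v(2) iu by simp
  qed
  have t2: "\<bar>Y r2 \<bullet> u\<bar> = 0" using v(3) iu by simp
  have t3: "\<bar>Y i \<bullet> u\<bar> \<le> h" if i: "i \<in> rest" for i
  proof -
    have "cen i \<bullet> u = 0" using cen i iu by simp
    hence "Y i \<bullet> u = (Y i - cen i) \<bullet> u" by (simp add: inner_diff_left)
    hence "\<bar>Y i \<bullet> u\<bar> \<le> norm (Y i - cen i)" using Cauchy_Schwarz_ineq2[of "Y i - cen i" u] nu by simp
    thus ?thesis using close i by auto
  qed
  have "smin (\<chi> i. Y i) \<le> norm ((\<chi> i. Y i) *v u)" by (rule smin_le[OF nu])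
  also have "\<dots> \<le> (\<Sum>i\<in>UNIV. \<bar>((\<chi> i. Y i) *v u) $ i\<bar>)" by (rule norm_le_l1_cart)
  also have "\<dots> = (\<Sum>i\<in>UNIV. \<bar>Y i \<bullet> u\<bar>)" by (simp add: matrix_vector_mul_component)
  also have "UNIV = insert r1 (insert r2 rest)" using rest by auto
  also have "(\<Sum>i\<in>insert r1 (insert r2 rest). \<bar>Y i \<bullet> u\<bar>) = \<bar>Y r1 \<bullet> u\<bar> + \<bar>Y r2 \<bullet> u\<bar> + (\<Sum>i\<in>rest. \<bar>Y i \<bullet> u\<bar>)"
    using r rest by simp
  also have "\<dots> \<le> 2 * R * d + 0 + (\<Sum>i\<in>rest. h)"
    using t1 t2 t3 by (intro add_mono sum_mono) auto
  finally show ?thesis by simp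
qed



lemma vec_nth_meas[measurable]: "(\<lambda>x::real^'n. x $ j) \<in> borel_measurable borel"
  by (intro borel_measurable_continuous_onI continuous_intros)

lemma Dg_meas: fixes g :: "'n::finite \<Rightarrow> int"
  shows "{x::real^'n. norm x \<le> R \<and> (\<forall>j. floor (x$j / eta) = g j)} \<in> sets borel"
  by measurable

lemma Cc_meas: fixes a b :: "real^'n::finite"
  shows "{x::real^'n. norm x \<le> R \<and> chartf (x \<bullet> a) (x \<bullet> b) = c \<and> floor (slopef (x \<bullet> a) (x \<bullet> b) / d) = k} \<in> sets borel"
  unfolding chartf_def slopef_def by measurable

lemma rows_meas:
  fixes X :: "'n::finite \<Rightarrow> 'a \<Rightarrow> real^'n"
  assumes "\<And>i. X i \<in> borel_measurable M"
  shows "(\<lambda>\<omega>. \<chi> i. X i \<omega>) \<in> borel_measurable M"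
proof (subst borel_measurable_euclidean_space, intro ballI)
  fix b :: "real^'n^'n" assume "b \<in> Basis"
  then obtain i u where b: "b = axis i u" "u \<in> Basis" unfolding Basis_vec_def by auto
  have "(\<lambda>\<omega>. (\<chi> i. X i \<omega>) \<bullet> b) = (\<lambda>\<omega>. X i \<omega> \<bullet> u)" unfolding b by (simp add: inner_axis)
  moreover have "(\<lambda>\<omega>. X i \<omega> \<bullet> u) \<in> borel_measurable M" using assms[of i] by measurable
  ultimately show "(\<lambda>\<omega>. (\<chi> i. X i \<omega>) \<bullet> b) \<in> borel_measurable M" by simp
qed

lemma smin_rows_meas:
  fixes X :: "'n::finite \<Rightarrow> 'a \<Rightarrow> real^'n"
  assumes "\<And>i. X i \<in> borel_measurable M"
  shows "(\<lambda>\<omega>. smin (\<chi> i. X i \<omega>)) \<in> borel_measurable M"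
  using measurable_compose[OF rows_meas[OF assms] borel_measurable_continuous_onI[OF smin_cont]] by simp

lemma sum_sq_ge: fixes a :: "'b \<Rightarrow> real"
  assumes "finite S" "card S > 0"
  shows "(\<Sum>i\<in>S. a i)^2 / card S \<le> (\<Sum>i\<in>S. (a i)^2)"
proof -
  have "(\<Sum>i\<in>S. a i * 1)^2 \<le> (\<Sum>i\<in>S. (a i)^2) * (\<Sum>i\<in>S. 1^2)" by (rule Cauchy_Schwarz_ineq_sum)
  thus ?thesis using assms by (simp add: divide_le_eq)
qed



lemma floor_in_range: fixes v c :: real assumes "\<bar>v\<bar> \<le> c"
  shows "floor v \<le> \<lceil>c\<rceil> \<and> - \<lceil>c\<rceil> \<le> floor v"
proof -
  have "v \<le> of_int \<lceil>c\<rceil>" "- of_int \<lceil>c\<rceil> \<le> v" using assms le_of_int_ceiling[of c] by (simp_all add: abs_le_iff) linarith+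
  thus ?thesis by (simp add: floor_le_iff le_floor_iff)
qed

lemma (in prob_space) core_eps:
  fixes X :: "'n::finite \<Rightarrow> 'a \<Rightarrow> real^'n"
  assumes ind: "indep_vars (\<lambda>_. borel) X UNIV"
    and dist: "\<And>i. distr M borel (X i) = distr M borel (X r1)"
    and r: "r1 \<noteq> r2"
    and R: "R \<ge> 1" and eps: "0 < \<epsilon>" "\<epsilon> \<le> 1"
  shows "(measure (distr M borel (X r1)) (cball 0 R))^CARD('n) / (32*R+6) * \<epsilon>
          \<le> measure M {\<omega>\<in>space M. smin (\<chi> i. X i \<omega>) < \<epsilon>}"
proof -
  define \<mu> where "\<mu> = distr M borel (X r1)"
  have meas: "\<And>i. X i \<in> borel_measurable M" using ind unfolding indep_vars_def by auto
  have p\<mu>: "prob_space \<mu>" unfolding \<mu>_def by (rule prob_space_distr) (simp add: meas)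
  define m where "m = measure \<mu> (cball 0 R)"
  define rest where "rest = (UNIV::'n set) - {r1, r2}"
  define nn where "nn = real CARD('n)"
  define \<eta> where "\<eta> = \<epsilon> / (4 * nn^2)"
  define d where "d = \<epsilon> / (8 * R)"
  define N' where "N' = \<lceil>R / \<eta>\<rceil>"
  define N where "N = \<lceil>1 / d\<rceil>"
  define Gset where "Gset = PiE (UNIV::'n set) (\<lambda>_. {-N'..N'})"
  define T where "T = PiE rest (\<lambda>_. Gset)"
  define Cset where "Cset = ({0,1} :: int set) \<times> {-N..N}"
  define Dg where "Dg g = {x::real^'n. norm x \<le> R \<and> (\<forall>j. floor (x$j / \<eta>) = g j)}" for g
  define cen where "cen g = ((\<chi> j. \<eta> * of_int (g j)) :: real^'n)" for g :: "'n \<Rightarrow> int"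
  define fr where "fr t = (SOME p. norm (fst p) = 1 \<and> norm (snd p) = 1 \<and> fst p \<bullet> snd p = 0 \<and>
      (\<forall>c\<in>(\<lambda>i. cen (t i)) ` rest. c \<bullet> fst p = 0 \<and> c \<bullet> snd p = (0::real)))" for t
  define Cc where "Cc t ck = {x. norm x \<le> R \<and> chartf (x \<bullet> fst (fr t)) (x \<bullet> snd (fr t)) = fst ck \<and>
      floor (slopef (x \<bullet> fst (fr t)) (x \<bullet> snd (fr t)) / d) = snd ck}" for t and ck :: "int \<times> int"
  define B where "B t ck i = (if i \<in> rest then Dg (t i) else Cc t ck)" for t ck i
  define Aev where "Aev p = (\<Inter>i. X i -` B (fst p) (snd p) i \<inter> space M)" for p

  have c2: "CARD('n) \<ge> 2"
  proof -
    have "card {r1, r2} \<le> CARD('n)" by (rule card_mono) auto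
    thus ?thesis using r by simp
  qed
  have nn2: "nn \<ge> 2" unfolding nn_def using c2 by simp
  have card_rest: "card rest + 2 = CARD('n)"
    unfolding rest_def using c2 r by (subst card_Diff_subset) auto
  have eta: "\<eta> > 0" unfolding \<eta>_def using eps nn2 by simp
  have dpos: "d > 0" unfolding d_def using eps R by simp

  have fr: "norm (fst (fr t)) = 1 \<and> norm (snd (fr t)) = 1 \<and> fst (fr t) \<bullet> snd (fr t) = 0 \<and>
      (\<forall>i\<in>rest. cen (t i) \<bullet> fst (fr t) = 0 \<and> cen (t i) \<bullet> snd (fr t) = 0)" for t
  proof -
    have "card ((\<lambda>i. cen (t i)) ` rest) \<le> card rest" by (rule card_image_le) simp
    hence "card ((\<lambda>i. cen (t i)) ` rest) + 2 \<le> CARD('n)" using card_rest by simp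
    then obtain a b :: "real^'n" where ab: "norm a = 1 \<and> norm b = 1 \<and> a \<bullet> b = 0 \<and>
        (\<forall>c\<in>(\<lambda>i. cen (t i)) ` rest. c \<bullet> a = 0 \<and> c \<bullet> b = 0)"
      using orth_pair[of "(\<lambda>i. cen (t i)) ` rest"] by auto
    have "norm (fst (fr t)) = 1 \<and> norm (snd (fr t)) = 1 \<and> fst (fr t) \<bullet> snd (fr t) = 0 \<and>
      (\<forall>c\<in>(\<lambda>i. cen (t i)) ` rest. c \<bullet> fst (fr t) = 0 \<and> c \<bullet> snd (fr t) = 0)"
      unfolding fr_def by (rule someI[of _ "(a, b)"]) (use ab in simp)
    thus ?thesis by blast
  qed
  have Dg_sets: "Dg g \<in> sets borel" for g unfolding Dg_def by (rule Dg_meas)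
  have Cc_sets: "Cc t ck \<in> sets borel" for t ck unfolding Cc_def by (rule Cc_meas)
  have B_sets: "B t ck i \<in> sets borel" for t ck i unfolding B_def using Dg_sets Cc_sets by simp
  have Aev_sets: "Aev p \<in> events" for p
  proof -
    have "X i -` B (fst p) (snd p) i \<inter> space M \<in> events" for i
      using measurable_sets[OF meas B_sets] by blast
    thus ?thesis unfolding Aev_def by (intro sets.countable_INT) auto
  qed

  have pX: "prob (X i -` S \<inter> space M) = measure \<mu> S" if "S \<in> sets borel" for i S
    using measure_distr[OF meas[of i] that] dist[of i] unfolding \<mu>_def by simp
  have prob_A: "prob (Aev p) = (\<Prod>i\<in>rest. measure \<mu> (Dg (fst p i))) * (measure \<mu> (Cc (fst p) (snd p)))^2" for p
  proof -
    have "prob (Aev p) = (\<Prod>i\<in>UNIV. prob (X i -` B (fst p) (snd p) i \<inter> space M))"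
      unfolding Aev_def by (rule indep_varsD[OF ind]) (auto simp: B_sets)
    also have "\<dots> = (\<Prod>i\<in>UNIV. measure \<mu> (B (fst p) (snd p) i))"
      by (intro prod.cong refl pX B_sets)
    also have "UNIV = insert r1 (insert r2 rest)" unfolding rest_def by auto
    also have "(\<Prod>i\<in>insert r1 (insert r2 rest). measure \<mu> (B (fst p) (snd p) i))
       = measure \<mu> (Cc (fst p) (snd p)) * measure \<mu> (Cc (fst p) (snd p)) * (\<Prod>i\<in>rest. measure \<mu> (Dg (fst p i)))"
      using r unfolding rest_def B_def by (simp add: mult.assoc)
    finally show ?thesis by (simp add: power2_eq_square mult.commute)
  qed
  have disj: "disjoint_family_on Aev (T \<times> Cset)"
  proof (unfold disjoint_family_on_def, intro ballI impI, rule ccontr)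
    fix p q assume p: "p \<in> T \<times> Cset" and q: "q \<in> T \<times> Cset" and pq: "p \<noteq> q"
      and ne: "Aev p \<inter> Aev q \<noteq> {}"
    then obtain \<omega> where w: "\<omega> \<in> Aev p" "\<omega> \<in> Aev q" by blast
    have wp: "X i \<omega> \<in> B (fst p) (snd p) i" "X i \<omega> \<in> B (fst q) (snd q) i" for i
      using w unfolding Aev_def by auto
    have "fst p i = fst q i" for i
    proof (cases "i \<in> rest")
      case True
      hence "X i \<omega> \<in> Dg (fst p i)" "X i \<omega> \<in> Dg (fst q i)" using wp[of i] unfolding B_def by auto
      thus ?thesis unfolding Dg_def by auto
    next
      case False
      thus ?thesis using p q unfolding T_def by (auto simp: PiE_def extensional_def)
    qed
    hence f: "fst p = fst q" by auto
    have r1r: "r1 \<notin> rest" unfolding rest_def by simp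
    have "X r1 \<omega> \<in> Cc (fst p) (snd p)" "X r1 \<omega> \<in> Cc (fst p) (snd q)"
      using wp[of r1] r1r f unfolding B_def by auto
    hence "snd p = snd q" unfolding Cc_def by (auto simp: prod_eq_iff)
    thus False using f pq by (simp add: prod_eq_iff)
  qed
  have closeD: "norm (x - cen g) \<le> nn * \<eta>" if x: "x \<in> Dg g" for x g
  proof -
    have "norm (x - cen g) \<le> (\<Sum>j\<in>UNIV. \<bar>(x - cen g) $ j\<bar>)" by (rule norm_le_l1_cart)
    also have "\<dots> \<le> (\<Sum>j\<in>(UNIV::'n set). \<eta>)"
    proof (rule sum_mono)
      fix j
      have fj: "floor (x$j / \<eta>) = g j" using x unfolding Dg_def by auto
      have "of_int (g j) \<le> x$j / \<eta>" "x$j / \<eta> < of_int (g j) + 1" using fj by linarith+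
      hence "\<eta> * of_int (g j) \<le> x$j" "x$j < \<eta> * of_int (g j) + \<eta>" using eta by (simp_all add: field_simps)
      thus "\<bar>(x - cen g) $ j\<bar> \<le> \<eta>" unfolding cen_def by simp
    qed
    finally show ?thesis unfolding nn_def by simp
  qed
  have sub: "(\<Union>p\<in>T \<times> Cset. Aev p) \<subseteq> {\<omega>\<in>space M. smin (\<chi> i. X i \<omega>) < \<epsilon>}"
  proof (intro subsetI)
    fix \<omega> assume "\<omega> \<in> (\<Union>p\<in>T \<times> Cset. Aev p)"
    then obtain p where p: "p \<in> T \<times> Cset" "\<omega> \<in> Aev p" by blast
    define t where "t = fst p"
    have wsp: "\<omega> \<in> space M" using p(2) unfolding Aev_def by auto
    have wp: "X i \<omega> \<in> B t (snd p) i" for i using p(2) unfolding Aev_def t_def by auto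
    have r12: "r1 \<notin> rest" "r2 \<notin> rest" unfolding rest_def by auto
    have c1: "X r1 \<omega> \<in> Cc t (snd p)" "X r2 \<omega> \<in> Cc t (snd p)" using wp[of r1] wp[of r2] r12 unfolding B_def by auto
    have "smin (\<chi> i. X i \<omega>) \<le> 2 * R * d + real (card rest) * (nn * \<eta>)"
    proof (rule det_bound[OF r rest_def])
      show "norm (fst (fr t)) = 1" "norm (snd (fr t)) = 1" "fst (fr t) \<bullet> snd (fr t) = 0"
        "\<forall>i\<in>rest. cen (t i) \<bullet> fst (fr t) = 0 \<and> cen (t i) \<bullet> snd (fr t) = 0" using fr[of t] by auto
      show "\<forall>i\<in>rest. norm (X i \<omega> - cen (t i)) \<le> nn * \<eta>"
      proof
        fix i assume i: "i \<in> rest"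
        hence "X i \<omega> \<in> Dg (t i)" using wp[of i] unfolding B_def by simp
        thus "norm (X i \<omega> - cen (t i)) \<le> nn * \<eta>" by (rule closeD)
      qed
      show "norm (X r1 \<omega>) \<le> R" using c1 unfolding Cc_def by auto
      show "chartf (X r1 \<omega> \<bullet> fst (fr t)) (X r1 \<omega> \<bullet> snd (fr t)) = chartf (X r2 \<omega> \<bullet> fst (fr t)) (X r2 \<omega> \<bullet> snd (fr t))"
        using c1 unfolding Cc_def by auto
      show "floor (slopef (X r1 \<omega> \<bullet> fst (fr t)) (X r1 \<omega> \<bullet> snd (fr t)) / d) = floor (slopef (X r2 \<omega> \<bullet> fst (fr t)) (X r2 \<omega> \<bullet> snd (fr t)) / d)"
        using c1 unfolding Cc_def by auto
      show "d > 0" by (rule dpos)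
    qed
    also have "2 * R * d = \<epsilon> / 4" unfolding d_def using R by simp
    also have "real (card rest) * (nn * \<eta>) \<le> nn * (nn * \<eta>)"
      using card_rest eta nn2 unfolding nn_def by (intro mult_right_mono) auto
    also have "nn * (nn * \<eta>) = \<epsilon> / 4" unfolding \<eta>_def using nn2 by (simp add: power2_eq_square)
    finally show "\<omega> \<in> {\<omega>\<in>space M. smin (\<chi> i. X i \<omega>) < \<epsilon>}" using wsp eps by simp
  qed
  have fm: "finite_measure \<mu>" using p\<mu> unfolding prob_space_def by blast
  have sets\<mu>: "sets \<mu> = sets borel" unfolding \<mu>_def by simp
  have sumC: "(\<Sum>ck\<in>Cset. measure \<mu> (Cc t ck)) = m" for t
  proof -
    have "(\<Sum>ck\<in>Cset. measure \<mu> (Cc t ck)) = measure \<mu> (\<Union>ck\<in>Cset. Cc t ck)"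
    proof (rule finite_measure.finite_measure_finite_Union[OF fm, symmetric])
      show "finite Cset" unfolding Cset_def by simp
      show "(\<lambda>ck. Cc t ck) ` Cset \<subseteq> sets \<mu>" using Cc_sets sets\<mu> by auto
      show "disjoint_family_on (\<lambda>ck. Cc t ck) Cset"
        unfolding disjoint_family_on_def Cc_def by (auto simp: prod_eq_iff)
    qed
    also have "(\<Union>ck\<in>Cset. Cc t ck) = cball 0 R"
    proof (intro equalityI subsetI)
      fix x assume "x \<in> (\<Union>ck\<in>Cset. Cc t ck)" thus "x \<in> cball 0 R" unfolding Cc_def by auto
    next
      fix x :: "real^'n" assume x: "x \<in> cball 0 R"
      define sl where "sl = slopef (x \<bullet> fst (fr t)) (x \<bullet> snd (fr t))"
      have sl: "\<bar>sl\<bar> \<le> 1" unfolding sl_def by (rule slopef_bound)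
      have "\<bar>sl / d\<bar> \<le> 1 / d" using sl dpos by (simp add: abs_divide divide_right_mono)
      hence "floor (sl / d) \<le> N" "- N \<le> floor (sl / d)" unfolding N_def using floor_in_range by auto
      moreover have "chartf (x \<bullet> fst (fr t)) (x \<bullet> snd (fr t)) \<in> {0, 1}" unfolding chartf_def by auto
      ultimately have "(chartf (x \<bullet> fst (fr t)) (x \<bullet> snd (fr t)), floor (sl / d)) \<in> Cset"
        unfolding Cset_def by auto
      moreover have "x \<in> Cc t (chartf (x \<bullet> fst (fr t)) (x \<bullet> snd (fr t)), floor (sl / d))"
        using x unfolding Cc_def sl_def by auto
      ultimately show "x \<in> (\<Union>ck\<in>Cset. Cc t ck)" by blast
    qed
    finally show ?thesis unfolding m_def .
  qed
  have sumG: "(\<Sum>g\<in>Gset. measure \<mu> (Dg g)) = m"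
  proof -
    have finG: "finite Gset" unfolding Gset_def by (intro finite_PiE) auto
    have "(\<Sum>g\<in>Gset. measure \<mu> (Dg g)) = measure \<mu> (\<Union>g\<in>Gset. Dg g)"
    proof (rule finite_measure.finite_measure_finite_Union[OF fm, symmetric])
      show "finite Gset" by (rule finG)
      show "Dg ` Gset \<subseteq> sets \<mu>" using Dg_sets sets\<mu> by auto
      show "disjoint_family_on Dg Gset"
        unfolding disjoint_family_on_def Dg_def by auto
    qed
    also have "(\<Union>g\<in>Gset. Dg g) = cball 0 R"
    proof (intro equalityI subsetI)
      fix x assume "x \<in> (\<Union>g\<in>Gset. Dg g)" thus "x \<in> cball 0 R" unfolding Dg_def by auto
    next
      fix x :: "real^'n" assume x: "x \<in> cball 0 R"
      have "floor (x$j / \<eta>) \<in> {-N'..N'}" for j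
      proof -
        have "\<bar>x$j\<bar> \<le> R" using x component_le_norm_cart[of x j] by simp
        hence "\<bar>x$j / \<eta>\<bar> \<le> R / \<eta>" using eta by (simp add: abs_divide divide_right_mono)
        hence "floor (x$j / \<eta>) \<le> N'" "- N' \<le> floor (x$j / \<eta>)" unfolding N'_def using floor_in_range by auto
        thus ?thesis by simp
      qed
      hence "(\<lambda>j. floor (x$j / \<eta>)) \<in> Gset" unfolding Gset_def by auto
      moreover have "x \<in> Dg (\<lambda>j. floor (x$j / \<eta>))" using x unfolding Dg_def by auto
      ultimately show "x \<in> (\<Union>g\<in>Gset. Dg g)" by blast
    qed
    finally show ?thesis unfolding m_def .
  qed
  have cardC: "card Cset > 0" "real (card Cset) * \<epsilon> \<le> 32 * R + 6"
  proof -
    have "1 / d > 0" using dpos by simp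
    hence N0: "N \<ge> 0" unfolding N_def by linarith
    have cs: "real (card Cset) = 2 * (2 * of_int N + 1)" unfolding Cset_def using N0
      by (simp add: card_cartesian_product)
    hence "real (card Cset) > 0" using N0 by (simp add: add_nonneg_pos)
    thus "card Cset > 0" by simp
    have "of_int N \<le> 1 / d + 1" unfolding N_def by (rule of_int_ceiling_le_add_one)
    also have "1 / d = 8 * R / \<epsilon>" unfolding d_def by simp
    finally have "real (card Cset) \<le> 2 * (2 * (8 * R / \<epsilon> + 1) + 1)" using cs by simp
    hence "real (card Cset) * \<epsilon> \<le> 2 * (2 * (8 * R / \<epsilon> + 1) + 1) * \<epsilon>" using eps by (simp add: mult_right_mono)
    also have "\<dots> = 32 * R + 6 * \<epsilon>" using eps by (simp add: field_simps)
    also have "\<dots> \<le> 32 * R + 6" using eps by simp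
    finally show "real (card Cset) * \<epsilon> \<le> 32 * R + 6" .
  qed
  have finT: "finite T" unfolding T_def Gset_def by (intro finite_PiE) auto
  have finC: "finite Cset" unfolding Cset_def by simp
  define P where "P t = (\<Prod>i\<in>rest. measure \<mu> (Dg (t i)))" for t
  have P0: "P t \<ge> 0" for t unfolding P_def by (simp add: prod_nonneg)
  have m0: "m \<ge> 0" unfolding m_def by simp
  define K where "K = real (card Cset)"
  have K0: "K > 0" using cardC unfolding K_def by simp
  have evs: "{\<omega>\<in>space M. smin (\<chi> i. X i \<omega>) < \<epsilon>} \<in> events"
    using smin_rows_meas[OF meas] by measurable
  have "prob (\<Union>p\<in>T \<times> Cset. Aev p) = (\<Sum>p\<in>T \<times> Cset. prob (Aev p))"
    using finT finC disj Aev_sets by (intro finite_measure_finite_Union) auto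
  also have "\<dots> = (\<Sum>t\<in>T. \<Sum>ck\<in>Cset. P t * (measure \<mu> (Cc t ck))^2)"
    unfolding sum.cartesian_product prob_A P_def by (simp add: case_prod_beta)
  also have "\<dots> = (\<Sum>t\<in>T. P t * (\<Sum>ck\<in>Cset. (measure \<mu> (Cc t ck))^2))"
    by (simp add: sum_distrib_left)
  also have "\<dots> \<ge> (\<Sum>t\<in>T. P t * (m^2 / K))"
  proof (intro sum_mono mult_left_mono P0)
    fix t
    show "m^2 / K \<le> (\<Sum>ck\<in>Cset. (measure \<mu> (Cc t ck))^2)"
      using sum_sq_ge[OF finC cardC(1), of "\<lambda>ck. measure \<mu> (Cc t ck)"] sumC[of t] unfolding K_def by simp
  qed
  also have "(\<Sum>t\<in>T. P t) = (\<Prod>i\<in>rest. \<Sum>g\<in>Gset. measure \<mu> (Dg g))"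
    unfolding P_def T_def by (rule prod_sum_PiE[symmetric]) (auto simp: Gset_def intro!: finite_PiE)
  hence "(\<Sum>t\<in>T. P t * (m^2 / K)) = m ^ card rest * (m^2 / K)"
    using sumG by (simp add: sum_distrib_right[symmetric] del: times_divide_eq_right)
  also have "\<dots> = m ^ CARD('n) / K"
    using card_rest[symmetric] by (simp add: power_add power2_eq_square)
  finally have main: "m ^ CARD('n) / K \<le> prob (\<Union>p\<in>T \<times> Cset. Aev p)" .
  have "m ^ CARD('n) / (32*R+6) * \<epsilon> \<le> m ^ CARD('n) / K"
  proof -
    have "K * \<epsilon> \<le> 32*R+6" using cardC unfolding K_def by simp
    hence "\<epsilon> / (32*R+6) \<le> 1 / K" using K0 R eps by (simp add: field_simps)
    thus ?thesis using m0 by (metis mult_left_mono times_divide_eq_left times_divide_eq_right mult_1_right zero_le_power)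
  qed
  also note main
  also have "prob (\<Union>p\<in>T \<times> Cset. Aev p) \<le> prob {\<omega>\<in>space M. smin (\<chi> i. X i \<omega>) < \<epsilon>}"
    by (rule finite_measure_mono[OF sub evs])
  finally show ?thesis unfolding m_def \<mu>_def .
qed



lemma dyadic_aux: fixes x :: real assumes x: "x > 0"
  shows "(\<Sum>k\<in>{1..N}. (if x < (1/2)^k then 2^(k-1) else 0)) \<le> (2::real)^N - 1 \<and>
         ((\<Sum>k\<in>{1..N}. (if x < (1/2)^k then 2^(k-1) else 0)) = (0::real) \<or>
          (\<Sum>k\<in>{1..N}. (if x < (1/2)^k then 2^(k-1) else 0)) < 1 / x)"
proof (induction N)
  case 0
  then show ?case by simp
next
  case (Suc N)
  define S where "S = (\<Sum>k\<in>{1..N}. (if x < (1/2)^k then 2^(k-1) else (0::real)))"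
  have eq: "(\<Sum>k\<in>{1..Suc N}. (if x < (1/2)^k then 2^(k-1) else (0::real))) = S + (if x < (1/2)^(Suc N) then 2^N else 0)"
    unfolding S_def by simp
  have IH: "S \<le> 2^N - 1" "S = 0 \<or> S < 1 / x" using Suc.IH unfolding S_def by auto
  have S0: "S \<ge> 0" unfolding S_def by (intro sum_nonneg) auto
  show ?case
  proof (cases "x < (1/2)^(Suc N)")
    case True
    have "x * 2^(Suc N) < 1" using True by (simp add: field_simps power_divide)
    hence "2^(Suc N) < 1 / x" using x by (simp add: field_simps)
    moreover have "S + 2^N \<le> 2^(Suc N) - 1" using IH(1) by simp
    ultimately show ?thesis unfolding eq using True by simp
  next
    case False
    have "(0::real) \<le> 2^N" by simp
    hence h: "S \<le> 2*2^N - 1" using IH(1) by linarith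
    show ?thesis unfolding eq using False IH h by simp
  qed
qed

lemma dyadic: fixes x :: real assumes x: "x > 0"
  shows "(\<Sum>k\<in>{1..N}. (if x < (1/2)^k then 2^(k-1) else 0)) \<le> 1 / x"
proof -
  have "1 / x > 0" using x by simp
  thus ?thesis using dyadic_aux[OF x, of N] by linarith
qed

lemma (in prob_space) exists_R:
  fixes Y :: "'a \<Rightarrow> real^'n::finite"
  assumes "Y \<in> borel_measurable M"
  shows "\<exists>R\<ge>1. measure (distr M borel Y) (cball 0 R) > 0"
proof (rule ccontr)
  assume neg: "\<not> ?thesis"
  have z: "measure (distr M borel Y) (cball 0 (real (Suc k))) = 0" for k
  proof -
    have "real (Suc k) \<ge> 1" by simp
    hence "\<not> measure (distr M borel Y) (cball 0 (real (Suc k))) > 0" using neg by blast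
    thus ?thesis using measure_nonneg[of "distr M borel Y" "cball 0 (real (Suc k))"] by linarith
  qed
  define \<mu> where "\<mu> = distr M borel Y"
  have p: "prob_space \<mu>" unfolding \<mu>_def by (rule prob_space_distr[OF assms])
  have ze: "emeasure \<mu> (cball 0 (real (Suc k))) = 0" for k
  proof -
    have fm: "finite_measure \<mu>" using p unfolding prob_space_def by blast
    show ?thesis using z[of k] finite_measure.emeasure_eq_measure[OF fm] unfolding \<mu>_def[symmetric] by simp
  qed
  have U: "(\<Union>k. cball (0::real^'n) (real (Suc k))) = UNIV"
  proof (intro equalityI subsetI)
    fix x :: "real^'n"
    obtain k where "norm x \<le> real k" using real_arch_simple by blast
    hence "x \<in> cball 0 (real (Suc k))" by simp
    thus "x \<in> (\<Union>k. cball 0 (real (Suc k)))" by blast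
  qed auto
  have "emeasure \<mu> (\<Union>k. cball 0 (real (Suc k))) \<le> (\<Sum>k. emeasure \<mu> (cball 0 (real (Suc k))))"
    by (rule emeasure_subadditive_countably) (auto simp: \<mu>_def)
  hence "emeasure \<mu> UNIV = 0" unfolding U ze by simp
  moreover have "emeasure \<mu> (space \<mu>) = 1" using p by (rule prob_space.emeasure_space_1)
  moreover have "space \<mu> = UNIV" unfolding \<mu>_def by simp
  ultimately show False by simp
qed



theorem mainTheorem1:
  fixes M :: "'a measure" and X :: "'n::finite \<Rightarrow> 'a \<Rightarrow> real^'n"
  assumes "prob_space M"
    and "CARD('n) \<ge> 2"
    and "prob_space.indep_vars M (\<lambda>_. borel) X UNIV"
    and "\<And>i j. distr M borel (X i) = distr M borel (X j)"
  shows "Liminf (at_right 0)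
           (\<lambda>\<epsilon>::real. ereal (measure M {\<omega> \<in> space M. smin (\<chi> i. X i \<omega>) < \<epsilon>} / \<epsilon>)) > 0 \<and>
         ((AE \<omega> in M. invertible (\<chi> i. X i \<omega>)) \<longrightarrow>
           (\<integral>\<^sup>+ \<omega>. ennreal (1 / smin (\<chi> i. X i \<omega>)) \<partial>M) = \<infinity> \<and>
           (\<integral>\<^sup>+ \<omega>. ennreal (opnorm2 (matrix_inv (\<chi> i. X i \<omega>))) \<partial>M) = \<infinity>)"
proof -
  interpret prob_space M by (rule assms(1))
  have ind: "indep_vars (\<lambda>_. borel) X UNIV" by (rule assms(3))
  have meas: "\<And>i. X i \<in> borel_measurable M" using ind unfolding indep_vars_def by auto
  obtain r1 r2 :: 'n where r: "r1 \<noteq> r2"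
  proof -
    have "1 < CARD('n)" using assms(2) by simp
    then obtain a b :: 'n where "a \<noteq> b" using card_le_Suc0_iff_eq[of "UNIV::'n set"] by force
    thus ?thesis using that by blast
  qed
  obtain R where R: "R \<ge> 1" "measure (distr M borel (X r1)) (cball 0 R) > 0"
    using exists_R[OF meas[of r1]] by blast
  define c0 where "c0 = (measure (distr M borel (X r1)) (cball 0 R))^CARD('n) / (32*R+6)"
  have c0: "c0 > 0" unfolding c0_def using R by simp
  define f where "f \<omega> = smin (\<chi> i. X i \<omega>)" for \<omega>
  have fm: "f \<in> borel_measurable M" unfolding f_def by (rule smin_rows_meas[OF meas])
  have bound: "c0 * \<epsilon> \<le> prob {\<omega>\<in>space M. f \<omega> < \<epsilon>}" if "0 < \<epsilon>" "\<epsilon> \<le> 1" for \<epsilon>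
    unfolding c0_def f_def using core_eps[OF ind _ r R(1) that] assms(4) by blast
  have part1: "Liminf (at_right 0) (\<lambda>\<epsilon>::real. ereal (prob {\<omega> \<in> space M. f \<omega> < \<epsilon>} / \<epsilon>)) > 0"
  proof -
    have ev: "eventually (\<lambda>\<epsilon>::real. 0 < \<epsilon> \<and> \<epsilon> < 1) (at_right 0)"
      unfolding eventually_at_right[OF zero_less_one] by (intro exI[of _ 1]) auto
    have "eventually (\<lambda>\<epsilon>::real. ereal c0 \<le> ereal (prob {\<omega> \<in> space M. f \<omega> < \<epsilon>} / \<epsilon>)) (at_right 0)"
    proof (rule eventually_mono[OF ev])
      fix \<epsilon> :: real assume e: "0 < \<epsilon> \<and> \<epsilon> < 1"
      hence "c0 * \<epsilon> \<le> prob {\<omega>\<in>space M. f \<omega> < \<epsilon>}" using bound by simp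
      hence "c0 \<le> prob {\<omega>\<in>space M. f \<omega> < \<epsilon>} / \<epsilon>" using e by (simp add: field_simps)
      thus "ereal c0 \<le> ereal (prob {\<omega> \<in> space M. f \<omega> < \<epsilon>} / \<epsilon>)" by simp
    qed
    hence "ereal c0 \<le> Liminf (at_right 0) (\<lambda>\<epsilon>::real. ereal (prob {\<omega> \<in> space M. f \<omega> < \<epsilon>} / \<epsilon>))"
      by (intro Liminf_bounded) simp
    moreover have "0 < ereal c0" using c0 by simp
    ultimately show ?thesis by (rule order_less_le_trans[rotated])
  qed
  have part2: "(\<integral>\<^sup>+ \<omega>. ennreal (1 / f \<omega>) \<partial>M) = \<infinity> \<and>
           (\<integral>\<^sup>+ \<omega>. ennreal (opnorm2 (matrix_inv (\<chi> i. X i \<omega>))) \<partial>M) = \<infinity>"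
    if inv: "AE \<omega> in M. invertible (\<chi> i. X i \<omega>)"
  proof -
    have AEf: "AE \<omega> in M. 0 < f \<omega> \<and> 1 / f \<omega> \<le> opnorm2 (matrix_inv (\<chi> i. X i \<omega>))"
    proof (rule AE_mp[OF inv], intro AE_I2 impI)
      fix \<omega> assume "invertible (\<chi> i. X i \<omega>)"
      thus "0 < f \<omega> \<and> 1 / f \<omega> \<le> opnorm2 (matrix_inv (\<chi> i. X i \<omega>))" unfolding f_def by (rule smin_inv)
    qed
    define E where "E k = {\<omega>\<in>space M. f \<omega> < (1/2)^k}" for k :: nat
    have Es: "E k \<in> events" for k unfolding E_def using fm by measurable
    have low: "ennreal (real Nn * (c0 / 2)) \<le> (\<integral>\<^sup>+ \<omega>. ennreal (1 / f \<omega>) \<partial>M)" for Nn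
    proof -
      have "ennreal (real Nn * (c0 / 2)) = (\<Sum>k\<in>{1..Nn}. ennreal (2^(k-1)) * ennreal (c0 * (1/2)^k))"
      proof -
        have "(\<Sum>k\<in>{1..Nn}. ennreal (2^(k-1)) * ennreal (c0 * (1/2)^k)) = (\<Sum>k\<in>{1..Nn}. ennreal (c0 / 2))"
        proof (rule sum.cong[OF refl])
          fix k assume k: "k \<in> {1..Nn}"
          have "(2::real)^(k-1) * (c0 * (1/2)^k) = c0 * (2^(k-1) * (1/2)^k)" by simp
          also have "(2::real)^(k-1) * (1/2)^k = 1/2" using k
            by (cases k) (auto simp: power_divide)
          finally show "ennreal (2^(k-1)) * ennreal (c0 * (1/2)^k) = ennreal (c0 / 2)"
            using c0 by (simp add: ennreal_mult'[symmetric])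
        qed
        also have "\<dots> = ennreal (real Nn * (c0 / 2))" using c0 by (simp add: ennreal_of_nat_eq_real_of_nat ennreal_mult[symmetric])
        finally show ?thesis by simp
      qed
      also have "\<dots> \<le> (\<Sum>k\<in>{1..Nn}. ennreal (2^(k-1)) * emeasure M (E k))"
      proof (intro sum_mono mult_left_mono)
        fix k assume k: "k \<in> {1..Nn}"
        have "c0 * (1/2)^k \<le> prob (E k)" unfolding E_def using k
          by (intro bound) (auto simp: power_le_one)
        thus "ennreal (c0 * (1/2)^k) \<le> emeasure M (E k)" by (simp add: emeasure_eq_measure)
      qed simp
      also have "\<dots> = (\<Sum>k\<in>{1..Nn}. \<integral>\<^sup>+ \<omega>. ennreal (2^(k-1)) * indicator (E k) \<omega> \<partial>M)"
        by (simp add: nn_integral_cmult_indicator Es)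
      also have "\<dots> = (\<integral>\<^sup>+ \<omega>. (\<Sum>k\<in>{1..Nn}. ennreal (2^(k-1)) * indicator (E k) \<omega>) \<partial>M)"
        by (rule nn_integral_sum[symmetric]) (rule borel_measurable_times_ennreal[OF borel_measurable_const borel_measurable_indicator[OF Es]])
      also have "\<dots> \<le> (\<integral>\<^sup>+ \<omega>. ennreal (1 / f \<omega>) \<partial>M)"
      proof (rule nn_integral_mono_AE)
        show "AE \<omega> in M. (\<Sum>k\<in>{1..Nn}. ennreal (2^(k-1)) * indicator (E k) \<omega>) \<le> ennreal (1 / f \<omega>)"
        proof (rule AE_mp[OF AEf], intro AE_I2 impI)
          fix \<omega> assume w: "\<omega> \<in> space M" and fp: "0 < f \<omega> \<and> 1 / f \<omega> \<le> opnorm2 (matrix_inv (\<chi> i. X i \<omega>))"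
          have "(\<Sum>k\<in>{1..Nn}. ennreal (2^(k-1)) * indicator (E k) \<omega>)
              = (\<Sum>k\<in>{1..Nn}. ennreal (if f \<omega> < (1/2)^k then 2^(k-1) else 0))"
            using w unfolding E_def by (intro sum.cong refl) (auto simp: indicator_def)
          also have "\<dots> = ennreal (\<Sum>k\<in>{1..Nn}. (if f \<omega> < (1/2)^k then 2^(k-1) else 0))"
            by (rule sum_ennreal) simp
          also have "\<dots> \<le> ennreal (1 / f \<omega>)" using dyadic[of "f \<omega>" Nn] fp by (intro ennreal_leI) auto
          finally show "(\<Sum>k\<in>{1..Nn}. ennreal (2^(k-1)) * indicator (E k) \<omega>) \<le> ennreal (1 / f \<omega>)" .
        qed
      qed
      finally show ?thesis .
    qed
    have inf1: "(\<integral>\<^sup>+ \<omega>. ennreal (1 / f \<omega>) \<partial>M) = \<infinity>"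
    proof (rule ccontr)
      assume "(\<integral>\<^sup>+ \<omega>. ennreal (1 / f \<omega>) \<partial>M) \<noteq> \<infinity>"
      then obtain r where r: "(\<integral>\<^sup>+ \<omega>. ennreal (1 / f \<omega>) \<partial>M) = ennreal r" "r \<ge> 0"
        by (cases "(\<integral>\<^sup>+ \<omega>. ennreal (1 / f \<omega>) \<partial>M)" rule: ennreal_cases) auto
      obtain Nn :: nat where Nn: "2 * r / c0 < real Nn" using reals_Archimedean2 by blast
      have "r < real Nn * (c0 / 2)" using Nn c0 by (simp add: field_simps)
      moreover have "real Nn * (c0 / 2) \<le> r" using low[of Nn] r c0 by simp
      ultimately show False by simp
    qed
    have "(\<integral>\<^sup>+ \<omega>. ennreal (1 / f \<omega>) \<partial>M) \<le> (\<integral>\<^sup>+ \<omega>. ennreal (opnorm2 (matrix_inv (\<chi> i. X i \<omega>))) \<partial>M)"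
    proof (rule nn_integral_mono_AE, rule AE_mp[OF AEf], intro AE_I2 impI)
      fix \<omega> assume "0 < f \<omega> \<and> 1 / f \<omega> \<le> opnorm2 (matrix_inv (\<chi> i. X i \<omega>))"
      thus "ennreal (1 / f \<omega>) \<le> ennreal (opnorm2 (matrix_inv (\<chi> i. X i \<omega>)))" by (intro ennreal_leI) simp
    qed
    hence "(\<integral>\<^sup>+ \<omega>. ennreal (opnorm2 (matrix_inv (\<chi> i. X i \<omega>))) \<partial>M) = \<infinity>" using inf1 by (simp add: top_unique)
    with inf1 show ?thesis by simp
  qed
  show ?thesis using part1 part2 unfolding f_def by blast
qed

end
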